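(* Let $X$ be a space and fix $x_0\in X$. Then $X$ is wep-connected if and only if for each $x\in X$ there is a path $p:I\to X$ from $x_0$ to $x$ such that for every open neighborhood $\mathcal U$ of $p$ in $P(X,x_0)$ there is an open neighborhood $V$ of $x$ in $X$ such that for every $v\in V$ there is a path $q\in\mathcal U$ from $x_0$ to $v$.
   Context: $P(X)$ is the space of paths $I=[0,1]\to X$ with the compact-open topology and $P(X,x_0)=\{\alpha\in P(X):\alpha(0)=x_0\}$ with the subspace topology. A path $p:I\to X$ is well-ended if for every open neighborhood $\mathcal U$ of $p$ in $P(X)$ there are open neighborhoods $V_0,V_1$ of $p(0),p(1)$ in $X$ such that for all $a\in V_0,b\in V_1$ there is $q\in\mathcal U$ with $q(0)=a$, $q(1)=b$. $X$ is wep-connected if any two points of $X$ are joined by a well-ended path in $X$. *)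

theory Defs
  imports "HOL-Analysis.Analysis"
begin

text \<open>Paths in an (abstract) topological space X: continuous maps from I = [0,1].
  Paths are represented as functions real => 'a; values outside [0,1] are irrelevant.\<close>
definition paths :: "'a topology \<Rightarrow> (real \<Rightarrow> 'a) set" where
  "paths X = {p. continuous_map (top_of_set {0..1}) X p}"

definition compact_open_paths :: "'a topology \<Rightarrow> (real \<Rightarrow> 'a) topology" where
  "compact_open_paths X =
     subtopology
       (topology_generated_by
          {{f. f ` K \<subseteq> U} | K U. compactin euclideanreal K \<and> K \<subseteq> {0..1} \<and> openin X U})
       (paths X)"

definition based_paths_top :: "'a topology \<Rightarrow> 'a \<Rightarrow> (real \<Rightarrow> 'a) topology" where
  "based_paths_top X x0 = subtopology (compact_open_paths X) {p \<in> paths X. p 0 = x0}"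

definition well_ended :: "'a topology \<Rightarrow> (real \<Rightarrow> 'a) \<Rightarrow> bool" where
  "well_ended X p \<longleftrightarrow>
     (\<forall>\<U>. openin (compact_open_paths X) \<U> \<and> p \<in> \<U> \<longrightarrow>
        (\<exists>V0 V1. openin X V0 \<and> openin X V1 \<and> p 0 \<in> V0 \<and> p 1 \<in> V1 \<and>
           (\<forall>a\<in>V0. \<forall>b\<in>V1. \<exists>q\<in>\<U>. q 0 = a \<and> q 1 = b)))"

definition wep_connected :: "'a topology \<Rightarrow> bool" where
  "wep_connected X \<longleftrightarrow>
     (\<forall>x\<in>topspace X. \<forall>y\<in>topspace X.
        \<exists>p\<in>paths X. p 0 = x \<and> p 1 = y \<and> well_ended X p)"

end

theory Submission
  imports Defs
begin

definition jn :: "(real \<Rightarrow> 'a) \<Rightarrow> (real \<Rightarrow> 'a) \<Rightarrow> real \<Rightarrow> 'a" where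
  "jn f g t = (if t \<le> 1/2 then f (1 - 2*t) else g (2*t - 1))"

lemma jn_paths:
  assumes f: "f \<in> paths X" and g: "g \<in> paths X" and e: "f 0 = g 0"
  shows "jn f g \<in> paths X"
proof -
  have cf: "continuous_map (top_of_set {0..1}) X f" using f by (simp add: paths_def)
  have cg: "continuous_map (top_of_set {0..1}) X g" using g by (simp add: paths_def)
  have "continuous_map (top_of_set {0..1}) X (\<lambda>t. if id t \<le> (\<lambda>_. 1/2) t then f (1 - 2*t) else g (2*t - 1))"
  proof (rule continuous_map_cases_le)
    show "continuous_map (top_of_set {0..1}) euclideanreal id"
      by (simp add: continuous_map_from_subtopology)
    show "continuous_map (top_of_set {0..1}) euclideanreal (\<lambda>_. 1/2)" by simp
    show "continuous_map (subtopology (top_of_set {0..1}) {x \<in> topspace (top_of_set {0..1}). id x \<le> (1/2::real)}) X (\<lambda>t. f (1 - 2 * t))"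
    proof -
      have "continuous_map (subtopology (top_of_set {0..1}) {x \<in> topspace (top_of_set {0..1}). id x \<le> (1/2::real)}) (top_of_set {0..1}) (\<lambda>t. 1 - 2*t)"
        by (auto simp: continuous_map_in_subtopology subtopology_subtopology intro!: continuous_map_from_subtopology continuous_intros)
      then show ?thesis using cf continuous_map_compose[of _ _ "\<lambda>t. 1 - 2*t" X f] by (simp add: o_def)
    qed
    show "continuous_map (subtopology (top_of_set {0..1}) {x \<in> topspace (top_of_set {0..1}). (1/2::real) \<le> id x}) X (\<lambda>t. g (2 * t - 1))"
    proof -
      have "continuous_map (subtopology (top_of_set {0..1}) {x \<in> topspace (top_of_set {0..1}). (1/2::real) \<le> id x}) (top_of_set {0..1}) (\<lambda>t. 2*t - 1)"
        by (auto simp: continuous_map_in_subtopology subtopology_subtopology intro!: continuous_map_from_subtopology continuous_intros)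
      then show ?thesis using cg continuous_map_compose[of _ _ "\<lambda>t. 2*t - 1" X g] by (simp add: o_def)
    qed
    show "\<And>x. x \<in> topspace (top_of_set {0..1}) \<Longrightarrow> id x = 1/2 \<Longrightarrow> f (1 - 2 * x) = g (2 * x - 1)"
    proof -
      fix x :: real assume "id x = 1/2"
      then have "1 - 2*x = 0" "2*x - 1 = 0" by auto
      then show "f (1 - 2 * x) = g (2 * x - 1)" using e by simp
    qed
  qed
  then show ?thesis by (simp add: paths_def jn_def[abs_def])
qed

definition SB :: "'a topology \<Rightarrow> (real \<Rightarrow> 'a) set set" where
  "SB X = {{f. f ` K \<subseteq> U} | K U. compactin euclideanreal K \<and> K \<subseteq> {0..1} \<and> openin X U}"

lemma cop_eq: "compact_open_paths X = subtopology (topology_generated_by (SB X)) (paths X)"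
  by (simp add: compact_open_paths_def SB_def)

lemma open_basic:
  assumes "compact K" "K \<subseteq> {0..1}" "openin X U"
  shows "openin (compact_open_paths X) ({f. f ` K \<subseteq> U} \<inter> paths X)"
  unfolding cop_eq openin_subtopology
  using assms by (auto simp: SB_def intro!: topology_generated_by_Basis)

lemma jn_cont:
  assumes "generate_topology_on (SB X) W"
  shows "\<forall>px py. px \<in> paths X \<and> py \<in> paths X \<and> px 0 = py 0 \<and> jn px py \<in> W \<longrightarrow>
     (\<exists>Wx Wy. openin (compact_open_paths X) Wx \<and> openin (compact_open_paths X) Wy \<and> px \<in> Wx \<and> py \<in> Wy \<and>
        (\<forall>qx\<in>Wx. \<forall>qy\<in>Wy. jn qx qy \<in> W))"
  using assms
proof induction
  case Empty
  then show ?case by simp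
next
  case (Int a b)
  show ?case
  proof (intro allI impI)
    fix px py assume h: "px \<in> paths X \<and> py \<in> paths X \<and> px 0 = py 0 \<and> jn px py \<in> a \<inter> b"
    obtain Ax Ay where A: "openin (compact_open_paths X) Ax" "openin (compact_open_paths X) Ay" "px \<in> Ax" "py \<in> Ay"
      "\<forall>qx\<in>Ax. \<forall>qy\<in>Ay. jn qx qy \<in> a"
    proof -
      have ha: "px \<in> paths X \<and> py \<in> paths X \<and> px 0 = py 0 \<and> jn px py \<in> a" using h by blast
      show ?thesis using Int.IH(1)[rule_format, OF ha] that by blast
    qed
    obtain Bx By where B: "openin (compact_open_paths X) Bx" "openin (compact_open_paths X) By" "px \<in> Bx" "py \<in> By"
      "\<forall>qx\<in>Bx. \<forall>qy\<in>By. jn qx qy \<in> b"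
    proof -
      have hb: "px \<in> paths X \<and> py \<in> paths X \<and> px 0 = py 0 \<and> jn px py \<in> b" using h by blast
      show ?thesis using Int.IH(2)[rule_format, OF hb] that by blast
    qed
    show "\<exists>Wx Wy. openin (compact_open_paths X) Wx \<and> openin (compact_open_paths X) Wy \<and> px \<in> Wx \<and> py \<in> Wy \<and>
        (\<forall>qx\<in>Wx. \<forall>qy\<in>Wy. jn qx qy \<in> a \<inter> b)"
      by (rule exI[of _ "Ax \<inter> Bx"], rule exI[of _ "Ay \<inter> By"]) (use A B in auto)
  qed
next
  case (UN K)
  show ?case
  proof (intro allI impI)
    fix px py assume h: "px \<in> paths X \<and> py \<in> paths X \<and> px 0 = py 0 \<and> jn px py \<in> \<Union>K"
    then obtain k where k: "k \<in> K" "jn px py \<in> k" by auto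
    obtain Ax Ay where A: "openin (compact_open_paths X) Ax" "openin (compact_open_paths X) Ay" "px \<in> Ax" "py \<in> Ay"
      "\<forall>qx\<in>Ax. \<forall>qy\<in>Ay. jn qx qy \<in> k" 
    proof -
      have hk: "px \<in> paths X \<and> py \<in> paths X \<and> px 0 = py 0 \<and> jn px py \<in> k" using h k by blast
      show ?thesis using UN.IH[OF k(1), rule_format, OF hk] that by blast
    qed
    show "\<exists>Wx Wy. openin (compact_open_paths X) Wx \<and> openin (compact_open_paths X) Wy \<and> px \<in> Wx \<and> py \<in> Wy \<and>
        (\<forall>qx\<in>Wx. \<forall>qy\<in>Wy. jn qx qy \<in> \<Union>K)"
      using A k by blast
  qed
next
  case (Basis s)
  then obtain K U where s: "s = {f. f ` K \<subseteq> U}" and K0: "compactin euclideanreal K" "K \<subseteq> {0..1}" and U: "openin X U"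
    unfolding SB_def by blast
  have K: "compact K" "K \<subseteq> {0..1}" using K0 by simp_all
  define K1 where "K1 = (\<lambda>t::real. 1 - 2*t) ` (K \<inter> {..1/2})"
  define K2 where "K2 = (\<lambda>t::real. 2*t - 1) ` (K \<inter> {1/2..})"
  have cK1: "compact K1" unfolding K1_def
    by (rule compact_continuous_image) (intro continuous_intros, simp add: compact_Int_closed K(1))
  have cK2: "compact K2" unfolding K2_def
    by (rule compact_continuous_image) (intro continuous_intros, simp add: compact_Int_closed K(1))
  have sK1: "K1 \<subseteq> {0..1}" using K(2) by (auto simp: K1_def)
  have sK2: "K2 \<subseteq> {0..1}" using K(2) by (auto simp: K2_def)
  show ?case
  proof (intro allI impI)
    fix px py assume h: "px \<in> paths X \<and> py \<in> paths X \<and> px 0 = py 0 \<and> jn px py \<in> s"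
    have hx: "px ` K1 \<subseteq> U"
    proof
      fix z assume "z \<in> px ` K1"
      then obtain t where t: "t \<in> K" "t \<le> 1/2" "z = px (1 - 2*t)" by (auto simp: K1_def)
      have "jn px py ` K \<subseteq> U" using h s by simp
      then have "jn px py t \<in> U" using t(1) by blast
      then show "z \<in> U" using t by (simp add: jn_def)
    qed
    have hy: "py ` K2 \<subseteq> U"
    proof
      fix z assume "z \<in> py ` K2"
      then obtain t where t: "t \<in> K" "t \<ge> 1/2" "z = py (2*t - 1)" by (auto simp: K2_def)
      have "jn px py ` K \<subseteq> U" using h s by simp
      then have j: "jn px py t \<in> U" using t(1) by blast
      show "z \<in> U"
      proof (cases "t = 1/2")
        case True
        have "z = py 0" "jn px py t = px 0" using t(3) by (simp_all add: jn_def True)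
        then show ?thesis using j h by simp
      next
        case False
        then show ?thesis using j t by (simp add: jn_def)
      qed
    qed
    show "\<exists>Wx Wy. openin (compact_open_paths X) Wx \<and> openin (compact_open_paths X) Wy \<and> px \<in> Wx \<and> py \<in> Wy \<and>
        (\<forall>qx\<in>Wx. \<forall>qy\<in>Wy. jn qx qy \<in> s)"
    proof -
      have o1: "openin (compact_open_paths X) ({f. f ` K1 \<subseteq> U} \<inter> paths X)" by (rule open_basic[OF cK1 sK1 U])
      have o2: "openin (compact_open_paths X) ({f. f ` K2 \<subseteq> U} \<inter> paths X)" by (rule open_basic[OF cK2 sK2 U])
      have m1: "px \<in> {f. f ` K1 \<subseteq> U} \<inter> paths X" using hx h by blast
      have m2: "py \<in> {f. f ` K2 \<subseteq> U} \<inter> paths X" using hy h by blast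
      have "\<forall>qx\<in>{f. f ` K1 \<subseteq> U} \<inter> paths X. \<forall>qy\<in>{f. f ` K2 \<subseteq> U} \<inter> paths X. jn qx qy \<in> s"
      proof (intro ballI)
        fix qx qy assume qx: "qx \<in> {f. f ` K1 \<subseteq> U} \<inter> paths X" and qy: "qy \<in> {f. f ` K2 \<subseteq> U} \<inter> paths X"
        have "jn qx qy t \<in> U" if "t \<in> K" for t
        proof (cases "t \<le> 1/2")
          case True
          then have "1 - 2*t \<in> K1" using that by (auto simp: K1_def)
          then have "qx (1 - 2*t) \<in> U" using qx by blast
          then show ?thesis using True by (simp add: jn_def)
        next
          case False
          then have "2*t - 1 \<in> K2" using that by (auto simp: K2_def)
          then have "qy (2*t - 1) \<in> U" using qy by blast
          then show ?thesis using False by (simp add: jn_def)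
        qed
        then show "jn qx qy \<in> s" using s by blast
      qed
      then show ?thesis using o1 o2 m1 m2 by blast
    qed
  qed
qed

theorem lemma4p15:
  fixes X :: "'a topology" and x0 :: 'a
  assumes "x0 \<in> topspace X"
  shows "wep_connected X \<longleftrightarrow>
    (\<forall>x\<in>topspace X. \<exists>p\<in>paths X. p 0 = x0 \<and> p 1 = x \<and>
       (\<forall>\<U>. openin (based_paths_top X x0) \<U> \<and> p \<in> \<U> \<longrightarrow>
          (\<exists>V. openin X V \<and> x \<in> V \<and> (\<forall>v\<in>V. \<exists>q\<in>\<U>. q 0 = x0 \<and> q 1 = v))))"
  (is "?L \<longleftrightarrow> ?R")
proof
  assume L: ?L
  show ?R
  proof
    fix x assume x: "x \<in> topspace X"
    obtain p where p: "p \<in> paths X" "p 0 = x0" "p 1 = x" "well_ended X p"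

      using L[unfolded wep_connected_def, rule_format, OF assms x] by blast
    show "\<exists>p\<in>paths X. p 0 = x0 \<and> p 1 = x \<and>
       (\<forall>\<U>. openin (based_paths_top X x0) \<U> \<and> p \<in> \<U> \<longrightarrow>
          (\<exists>V. openin X V \<and> x \<in> V \<and> (\<forall>v\<in>V. \<exists>q\<in>\<U>. q 0 = x0 \<and> q 1 = v)))"
    proof (intro bexI conjI allI impI)
      fix \<U> assume U: "openin (based_paths_top X x0) \<U> \<and> p \<in> \<U>"
      then obtain W where W: "openin (compact_open_paths X) W" "\<U> = W \<inter> {p \<in> paths X. p 0 = x0}"
        unfolding based_paths_top_def openin_subtopology by blast
      have Wp: "W \<subseteq> paths X" using openin_subset[OF W(1)] by (simp add: compact_open_paths_def)
      obtain V0 V1 where V: "openin X V0" "openin X V1" "p 0 \<in> V0" "p 1 \<in> V1"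
        "\<forall>a\<in>V0. \<forall>b\<in>V1. \<exists>q\<in>W. q 0 = a \<and> q 1 = b"

      proof -
        have "openin (compact_open_paths X) W \<and> p \<in> W" using W U by blast
        from p(4)[unfolded well_ended_def, rule_format, OF this] show ?thesis using that by blast
      qed
      show "\<exists>V. openin X V \<and> x \<in> V \<and> (\<forall>v\<in>V. \<exists>q\<in>\<U>. q 0 = x0 \<and> q 1 = v)"
      proof (intro exI conjI ballI)
        fix v assume "v \<in> V1"
        then obtain q where "q \<in> W" "q 0 = x0" "q 1 = v" using V p by blast
        then show "\<exists>q\<in>\<U>. q 0 = x0 \<and> q 1 = v" using W Wp by blast
      qed (use V p in auto)
    qed (use p in auto)
  qed
next
  assume R: ?R
  show ?L
    unfolding wep_connected_def
  proof (intro ballI)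
    fix x y assume x: "x \<in> topspace X" and y: "y \<in> topspace X"
    obtain px where px: "px \<in> paths X" "px 0 = x0" "px 1 = x"
      "\<And>\<U>. openin (based_paths_top X x0) \<U> \<Longrightarrow> px \<in> \<U> \<Longrightarrow>
          (\<exists>V. openin X V \<and> x \<in> V \<and> (\<forall>v\<in>V. \<exists>q\<in>\<U>. q 0 = x0 \<and> q 1 = v))"
      using bspec[OF R x] by blast
    obtain py where py: "py \<in> paths X" "py 0 = x0" "py 1 = y"
      "\<And>\<U>. openin (based_paths_top X x0) \<U> \<Longrightarrow> py \<in> \<U> \<Longrightarrow>
          (\<exists>V. openin X V \<and> y \<in> V \<and> (\<forall>v\<in>V. \<exists>q\<in>\<U>. q 0 = x0 \<and> q 1 = v))"
      using bspec[OF R y] by blast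
    have jp: "jn px py \<in> paths X" using jn_paths[OF px(1) py(1)] px(2) py(2) by simp
    show "\<exists>p\<in>paths X. p 0 = x \<and> p 1 = y \<and> well_ended X p"
    proof (intro bexI conjI)
      show "jn px py 0 = x" using px by (simp add: jn_def)
      show "jn px py 1 = y" using py by (simp add: jn_def)
      show "well_ended X (jn px py)"
        unfolding well_ended_def
      proof (intro allI impI)
        fix \<U> assume U: "openin (compact_open_paths X) \<U> \<and> jn px py \<in> \<U>"
        then obtain T where T: "generate_topology_on (SB X) T" "\<U> = T \<inter> paths X"
          unfolding cop_eq openin_subtopology openin_topology_generated_by_iff by blast
        obtain Wx Wy where W: "openin (compact_open_paths X) Wx" "openin (compact_open_paths X) Wy"
          "px \<in> Wx" "py \<in> Wy" "\<forall>qx\<in>Wx. \<forall>qy\<in>Wy. jn qx qy \<in> T"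

        proof -
          have "px \<in> paths X \<and> py \<in> paths X \<and> px 0 = py 0 \<and> jn px py \<in> T" using px py U T by simp
          from jn_cont[OF T(1), rule_format, OF this] show ?thesis using that by blast
        qed
        have ox: "openin (based_paths_top X x0) (Wx \<inter> {p \<in> paths X. p 0 = x0})"
          unfolding based_paths_top_def openin_subtopology using W(1) by blast
        have oy: "openin (based_paths_top X x0) (Wy \<inter> {p \<in> paths X. p 0 = x0})"
          unfolding based_paths_top_def openin_subtopology using W(2) by blast
        obtain Vx where Vx: "openin X Vx" "x \<in> Vx"
          "\<forall>v\<in>Vx. \<exists>q\<in>Wx \<inter> {p \<in> paths X. p 0 = x0}. q 0 = x0 \<and> q 1 = v"
          using px(4)[OF ox] W px by blast
        obtain Vy where Vy: "openin X Vy" "y \<in> Vy"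
          "\<forall>v\<in>Vy. \<exists>q\<in>Wy \<inter> {p \<in> paths X. p 0 = x0}. q 0 = x0 \<and> q 1 = v"
          using py(4)[OF oy] W py by blast
        show "\<exists>V0 V1. openin X V0 \<and> openin X V1 \<and> jn px py 0 \<in> V0 \<and> jn px py 1 \<in> V1 \<and>
           (\<forall>a\<in>V0. \<forall>b\<in>V1. \<exists>q\<in>\<U>. q 0 = a \<and> q 1 = b)"
        proof (intro exI conjI ballI)
          fix a b assume a: "a \<in> Vx" and b: "b \<in> Vy"
          obtain qx where qx: "qx \<in> Wx" "qx \<in> paths X" "qx 0 = x0" "qx 1 = a" using Vx a by blast
          obtain qy where qy: "qy \<in> Wy" "qy \<in> paths X" "qy 0 = x0" "qy 1 = b" using Vy b by blast
          have "jn qx qy \<in> \<U>" using W qx qy T jn_paths[of qx X qy] by auto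
          then show "\<exists>q\<in>\<U>. q 0 = a \<and> q 1 = b" using qx qy by (intro bexI[of _ "jn qx qy"]) (auto simp: jn_def)
        qed (use Vx Vy px py in \<open>auto simp: jn_def\<close>)
      qed
    qed (rule jp)
  qed
qed

end
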